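(* The logic $\mathsf{ICK}\oplus((p\wedge(p\mathrel{\Box\!\!\!\rightarrow} q))\to q)$ is sound and complete with respect to the class of conditional frames $(X,\leq,\mathcal{R})$ satisfying: if $x\in a$ then $x\in{\uparrow}(R_a[x])$, for all worlds $x$ and upsets $a$.
   Context: Formulas: $\phi ::= p\mid\bot\mid\phi\wedge\phi\mid\phi\vee\phi\mid\phi\to\phi\mid\phi\mathrel{\Box\!\!\!\rightarrow}\phi$. $\mathsf{ICK}\oplus\Gamma$ is the smallest set containing intuitionistic propositional logic, $\Gamma$, $(p\mathrel{\Box\!\!\!\rightarrow}(q\wedge r))\leftrightarrow((p\mathrel{\Box\!\!\!\rightarrow} q)\wedge(p\mathrel{\Box\!\!\!\rightarrow} r))$ and $(p\mathrel{\Box\!\!\!\rightarrow}\top)\leftrightarrow\top$, closed under uniform substitution, modus ponens and congruence rules for both arguments of $\mathrel{\Box\!\!\!\rightarrow}$. A conditional frame is $(X,\leq,\mathcal{R})$, $(X,\leq)$ a nonempty preorder, $\mathcal{R}=\{R_a\mid a\text{ an upset}\}$ with $(\leq\circ R_a)\subseteq(R_a\circ\leq)$; valuations assign upsets to letters and $x\models\phi\mathrel{\Box\!\!\!\rightarrow}\psi$ iff every $y$ with $xR_{V(\phi)}y$ satisfies $\psi$. ${\uparrow}S$ is the upward closure of $S$. *)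

theory Defs
  imports Main
begin

datatype fm =
    Var nat
  | Bot
  | And fm fm
  | Or fm fm
  | Imp fm fm
  | Cond fm fm

definition Top :: fm where "Top = Imp Bot Bot"

definition Iff :: "fm \<Rightarrow> fm \<Rightarrow> fm" where
  "Iff a b = And (Imp a b) (Imp b a)"

primrec subst :: "(nat \<Rightarrow> fm) \<Rightarrow> fm \<Rightarrow> fm" where
  "subst s (Var p) = s p"
| "subst s Bot = Bot"
| "subst s (And a b) = And (subst s a) (subst s b)"
| "subst s (Or a b) = Or (subst s a) (subst s b)"
| "subst s (Imp a b) = Imp (subst s a) (subst s b)"
| "subst s (Cond a b) = Cond (subst s a) (subst s b)"

inductive ICK_plus :: "fm set \<Rightarrow> fm \<Rightarrow> bool" for \<Gamma> :: "fm set" where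
  ax1: "ICK_plus \<Gamma> (Imp a (Imp b a))"
| ax2: "ICK_plus \<Gamma> (Imp (Imp a (Imp b c)) (Imp (Imp a b) (Imp a c)))"
| ax3: "ICK_plus \<Gamma> (Imp (And a b) a)"
| ax4: "ICK_plus \<Gamma> (Imp (And a b) b)"
| ax5: "ICK_plus \<Gamma> (Imp a (Imp b (And a b)))"
| ax6: "ICK_plus \<Gamma> (Imp a (Or a b))"
| ax7: "ICK_plus \<Gamma> (Imp b (Or a b))"
| ax8: "ICK_plus \<Gamma> (Imp (Imp a c) (Imp (Imp b c) (Imp (Or a b) c)))"
| ax9: "ICK_plus \<Gamma> (Imp Bot a)"
| extra: "g \<in> \<Gamma> \<Longrightarrow> ICK_plus \<Gamma> g"
| cond_and: "ICK_plus \<Gamma> (Iff (Cond (Var 0) (And (Var 1) (Var 2)))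
                               (And (Cond (Var 0) (Var 1)) (Cond (Var 0) (Var 2))))"
| cond_top: "ICK_plus \<Gamma> (Iff (Cond (Var 0) Top) Top)"
| usubst: "ICK_plus \<Gamma> a \<Longrightarrow> ICK_plus \<Gamma> (subst s a)"
| mp: "ICK_plus \<Gamma> (Imp a b) \<Longrightarrow> ICK_plus \<Gamma> a \<Longrightarrow> ICK_plus \<Gamma> b"
| cong_l: "ICK_plus \<Gamma> (Iff a b) \<Longrightarrow> ICK_plus \<Gamma> (Iff (Cond a c) (Cond b c))"
| cong_r: "ICK_plus \<Gamma> (Iff a b) \<Longrightarrow> ICK_plus \<Gamma> (Iff (Cond c a) (Cond c b))"

definition CMP :: fm where
  "CMP = Imp (And (Var 0) (Cond (Var 0) (Var 1))) (Var 1)"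

definition upset :: "'w set \<Rightarrow> ('w \<Rightarrow> 'w \<Rightarrow> bool) \<Rightarrow> 'w set \<Rightarrow> bool" where
  "upset X le a \<longleftrightarrow> a \<subseteq> X \<and> (\<forall>x\<in>a. \<forall>y\<in>X. le x y \<longrightarrow> y \<in> a)"

text \<open>A conditional frame: carrier X, preorder le on X, and a relation R a for
every upset a (the value of R on non-upsets is irrelevant).
The condition (\<le> \<circ> R_a) \<subseteq> (R_a \<circ> \<le>) is read diagrammatically:
x \<le> y and y R_a z imply x R_a w and w \<le> z for some w.\<close>
definition cond_frame :: "'w set \<Rightarrow> ('w \<Rightarrow> 'w \<Rightarrow> bool) \<Rightarrow> ('w set \<Rightarrow> 'w \<Rightarrow> 'w \<Rightarrow> bool) \<Rightarrow> bool" where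
  "cond_frame X le R \<longleftrightarrow>
     X \<noteq> {} \<and>
     (\<forall>x\<in>X. le x x) \<and>
     (\<forall>x\<in>X. \<forall>y\<in>X. \<forall>z\<in>X. le x y \<longrightarrow> le y z \<longrightarrow> le x z) \<and>
     (\<forall>a. upset X le a \<longrightarrow> (\<forall>x y. R a x y \<longrightarrow> x \<in> X \<and> y \<in> X)) \<and>
     (\<forall>a. upset X le a \<longrightarrow>
        (\<forall>x\<in>X. \<forall>y\<in>X. \<forall>z\<in>X. le x y \<longrightarrow> R a y z \<longrightarrow> (\<exists>w\<in>X. R a x w \<and> le w z)))"

definition up :: "'w set \<Rightarrow> ('w \<Rightarrow> 'w \<Rightarrow> bool) \<Rightarrow> 'w set \<Rightarrow> 'w set" where
  "up X le S = {z \<in> X. \<exists>y\<in>S. le y z}"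

definition valuation :: "'w set \<Rightarrow> ('w \<Rightarrow> 'w \<Rightarrow> bool) \<Rightarrow> (nat \<Rightarrow> 'w set) \<Rightarrow> bool" where
  "valuation X le V \<longleftrightarrow> (\<forall>p. upset X le (V p))"

fun sat :: "'w set \<Rightarrow> ('w \<Rightarrow> 'w \<Rightarrow> bool) \<Rightarrow> ('w set \<Rightarrow> 'w \<Rightarrow> 'w \<Rightarrow> bool)
            \<Rightarrow> (nat \<Rightarrow> 'w set) \<Rightarrow> 'w \<Rightarrow> fm \<Rightarrow> bool" where
  "sat X le R V x (Var p) = (x \<in> V p)"
| "sat X le R V x Bot = False"
| "sat X le R V x (And a b) = (sat X le R V x a \<and> sat X le R V x b)"
| "sat X le R V x (Or a b) = (sat X le R V x a \<or> sat X le R V x b)"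
| "sat X le R V x (Imp a b) =
     (\<forall>y\<in>X. le x y \<longrightarrow> sat X le R V y a \<longrightarrow> sat X le R V y b)"
| "sat X le R V x (Cond a b) =
     (\<forall>y. R {z \<in> X. sat X le R V z a} x y \<longrightarrow> sat X le R V y b)"

definition valid_frame :: "'w set \<Rightarrow> ('w \<Rightarrow> 'w \<Rightarrow> bool) \<Rightarrow> ('w set \<Rightarrow> 'w \<Rightarrow> 'w \<Rightarrow> bool) \<Rightarrow> fm \<Rightarrow> bool" where
  "valid_frame X le R a \<longleftrightarrow> (\<forall>V. valuation X le V \<longrightarrow> (\<forall>x\<in>X. sat X le R V x a))"

definition mp_condition :: "'w set \<Rightarrow> ('w \<Rightarrow> 'w \<Rightarrow> bool) \<Rightarrow> ('w set \<Rightarrow> 'w \<Rightarrow> 'w \<Rightarrow> bool) \<Rightarrow> bool" where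
  "mp_condition X le R \<longleftrightarrow>
     (\<forall>x\<in>X. \<forall>a. upset X le a \<longrightarrow> x \<in> a \<longrightarrow> x \<in> up X le {y. R a x y})"

definition valid_class :: "'w itself \<Rightarrow> fm \<Rightarrow> bool" where
  "valid_class _ a \<longleftrightarrow>
     (\<forall>(X :: 'w set) le R. cond_frame X le R \<longrightarrow> mp_condition X le R \<longrightarrow> valid_frame X le R a)"

end

theory Submission
  imports Defs
begin

abbreviation PP where "PP \<equiv> ICK_plus {CMP}"

lemma sat_Top[simp]: "sat X le R V x Top" by (simp add: Top_def)

lemma frame_facts:
  assumes "cond_frame X le R"
  shows "\<And>x. x\<in>X \<Longrightarrow> le x x"
    and "\<And>x y z. x\<in>X \<Longrightarrow> y\<in>X \<Longrightarrow> z\<in>X \<Longrightarrow> le x y \<Longrightarrow> le y z \<Longrightarrow> le x z"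
    and "\<And>a x y. upset X le a \<Longrightarrow> R a x y \<Longrightarrow> x \<in> X \<and> y \<in> X"
    and "\<And>a x y z. upset X le a \<Longrightarrow> x\<in>X \<Longrightarrow> y\<in>X \<Longrightarrow> z\<in>X \<Longrightarrow> le x y \<Longrightarrow> R a y z \<Longrightarrow> (\<exists>w\<in>X. R a x w \<and> le w z)"
  using assms unfolding cond_frame_def by blast+

lemma persist:
  assumes F: "cond_frame X le R" and V: "valuation X le V"
  shows "x \<in> X \<Longrightarrow> y \<in> X \<Longrightarrow> le x y \<Longrightarrow> sat X le R V x a \<Longrightarrow> sat X le R V y a"
proof (induction a arbitrary: x y)
  case (Var p)
  then show ?case using V by (auto simp: valuation_def upset_def)
next
  case Bot then show ?case by simp
next
  case (And a b) then show ?case by auto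
next
  case (Or a b) then show ?case by auto
next
  case (Imp a b)
  have tr: "\<And>x y z. x\<in>X \<Longrightarrow> y\<in>X \<Longrightarrow> z\<in>X \<Longrightarrow> le x y \<Longrightarrow> le y z \<Longrightarrow> le x z" by (rule frame_facts(2)[OF F])
  show ?case using Imp.prems tr[of x y] by simp
next
  case (Cond a b)
  let ?A = "{z \<in> X. sat X le R V z a}"
  have up: "upset X le ?A" using Cond.IH(1) unfolding upset_def by blast
  show ?case
  proof (simp, intro allI impI)
    fix z assume z: "R ?A y z"
    have zX: "z \<in> X" using frame_facts(3)[OF F up z] by blast
    obtain w where w: "w \<in> X" "R ?A x w" "le w z"
      using frame_facts(4)[OF F up _ _ zX _ z] Cond.prems by blast
    have "sat X le R V w b" using Cond.prems(4) w by simp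
    then show "sat X le R V z b" using Cond.IH(2)[OF w(1) zX w(3)] by blast
  qed
qed

lemma upset_sat:
  assumes F: "cond_frame X le R" and V: "valuation X le V"
  shows "upset X le {z\<in>X. sat X le R V z a}"
  using persist[OF F V] unfolding upset_def by blast

lemma sat_subst:
  assumes F: "cond_frame X le R" and V: "valuation X le V"
  shows "x \<in> X \<Longrightarrow> sat X le R V x (subst s a) = sat X le R (\<lambda>p. {z\<in>X. sat X le R V z (s p)}) x a"
proof (induction a arbitrary: x)
  case (Cond a b)
  let ?V' = "\<lambda>p. {z\<in>X. sat X le R V z (s p)}"
  have eqA: "{z\<in>X. sat X le R V z (subst s a)} = {z\<in>X. sat X le R ?V' z a}"
    using Cond.IH(1) by blast
  have up: "upset X le {z\<in>X. sat X le R V z (subst s a)}" by (rule upset_sat[OF F V])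
  show ?case
    apply (simp only: sat.simps subst.simps eqA[symmetric])
    using Cond.IH(2) frame_facts(3)[OF F up] by blast
qed auto

lemma valuation_subst:
  assumes F: "cond_frame X le R" and V: "valuation X le V"
  shows "valuation X le (\<lambda>p. {z\<in>X. sat X le R V z (s p)})"
  using upset_sat[OF F V] unfolding valuation_def by blast

lemma soundness:
  assumes F: "cond_frame X le R" and M: "mp_condition X le R"
  shows "PP a \<Longrightarrow> valuation X le V \<Longrightarrow> x\<in>X \<Longrightarrow> sat X le R V x a"
proof (induction arbitrary: V x rule: ICK_plus.induct)
  case (ax1 a b)
  note P = persist[OF F ax1.prems(1)]
  show ?case by simp (meson P frame_facts(2)[OF F])
next
  case (ax2 a b c)
  note P = persist[OF F ax2.prems(1)]
  note T = frame_facts(2)[OF F]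
  note Rf = frame_facts(1)[OF F]
  show ?case
  proof (simp only: sat.simps, intro ballI impI)
    fix y z w
    assume y: "y\<in>X" "le x y" and h1: "\<forall>z\<in>X. le y z \<longrightarrow> sat X le R V z a \<longrightarrow> (\<forall>w\<in>X. le z w \<longrightarrow> sat X le R V w b \<longrightarrow> sat X le R V w c)"
      and z: "z\<in>X" "le y z" and h2: "\<forall>w\<in>X. le z w \<longrightarrow> sat X le R V w a \<longrightarrow> sat X le R V w b"
      and w: "w\<in>X" "le z w" "sat X le R V w a"
    have "le y w" using T y z w by blast
    then show "sat X le R V w c" using h1 h2 w Rf by blast
  qed
next
  case (ax3 a b)
  then show ?case by auto
next
  case (ax4 a b)
  then show ?case by auto
next
  case (ax5 a b)
  note P = persist[OF F ax5.prems(1)]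
  show ?case by simp (meson P frame_facts(2)[OF F])
next
  case (ax6 a b)
  then show ?case by auto
next
  case (ax7 a b)
  then show ?case by auto
next
  case (ax8 a c b)
  note T = frame_facts(2)[OF F]
  note Rf = frame_facts(1)[OF F]
  show ?case
  proof (simp only: sat.simps, intro ballI impI)
    fix y z w
    assume y: "y\<in>X" "le x y" and h1: "\<forall>z\<in>X. le y z \<longrightarrow> sat X le R V z a \<longrightarrow> sat X le R V z c"
      and z: "z\<in>X" "le y z" and h2: "\<forall>w\<in>X. le z w \<longrightarrow> sat X le R V w b \<longrightarrow> sat X le R V w c"
      and w: "w\<in>X" "le z w" "sat X le R V w a \<or> sat X le R V w b"
    have "le y w" using T y z w by blast
    then show "sat X le R V w c" using h1 h2 w by blast
  qed
next
  case (ax9 a)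
  then show ?case by auto
next
  case (extra g)
  then have g: "g = CMP" by simp
  have V0: "upset X le (V 0)" "upset X le (V 1)" using extra.prems by (auto simp: valuation_def)
  have eq: "{z\<in>X. z \<in> V 0} = V 0" using V0 by (auto simp: upset_def)
  show ?case unfolding g CMP_def
  proof (simp only: sat.simps eq, intro ballI impI)
    fix y assume y: "y \<in> X" "le x y" and h: "y \<in> V 0 \<and> (\<forall>z. R (V 0) y z \<longrightarrow> z \<in> V 1)"
    then obtain z where z: "R (V 0) y z" "le z y"
      using M V0 unfolding mp_condition_def up_def by blast
    have "z \<in> X" using frame_facts(3)[OF F V0(1) z(1)] by blast
    then show "y \<in> V 1" using h z y V0(2) unfolding upset_def by blast
  qed
next
  case cond_and
  then show ?case by (auto simp: Iff_def)
next
  case cond_top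
  then show ?case by (auto simp: Iff_def)
next
  case (usubst a s)
  show ?case using sat_subst[OF F usubst.prems(1) usubst.prems(2)]
      usubst.IH[OF valuation_subst[OF F usubst.prems(1)] usubst.prems(2)] by simp
next
  case (mp a b)
  have 1: "sat X le R V x (Imp a b)" and 2: "sat X le R V x a" using mp.IH mp.prems by blast+
  have "le x x" using frame_facts(1)[OF F] mp.prems(2) by blast
  then show ?case using 1 2 mp.prems(2) by simp
next
  case (cong_l a b c)
  have "\<forall>z\<in>X. sat X le R V z a = sat X le R V z b"
    using cong_l.IH[OF cong_l.prems(1)] frame_facts(1)[OF F] by (auto simp: Iff_def)
  then have eq: "{z\<in>X. sat X le R V z a} = {z\<in>X. sat X le R V z b}" by blast
  show ?case by (simp add: Iff_def eq)
next
  case (cong_r a b c)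
  have "\<forall>z\<in>X. sat X le R V z a = sat X le R V z b"
    using cong_r.IH[OF cong_r.prems(1)] frame_facts(1)[OF F] by (auto simp: Iff_def)
  then have "\<forall>z. R {z\<in>X. sat X le R V z c} y z \<longrightarrow> sat X le R V z a = sat X le R V z b" for y
    using frame_facts(3)[OF F upset_sat[OF F cong_r.prems(1)]] by blast
  then show ?case by (simp add: Iff_def)
qed


lemma sound_class: "PP a \<Longrightarrow> valid_class TYPE('w) a"
  unfolding valid_class_def valid_frame_def
proof (intro allI impI ballI)
  fix X :: "'w set" and le R V x
  assume h: "PP a" "cond_frame X le R" "mp_condition X le R" "valuation X le V" "x \<in> X"
  show "sat X le R V x a" by (rule soundness[OF h(2) h(3) h(1) h(4) h(5)])
qed

section \<open>Completeness\<close>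

inductive D :: "fm set \<Rightarrow> fm \<Rightarrow> bool" for G :: "fm set" where
  dthm: "PP a \<Longrightarrow> D G a"
| dhyp: "a \<in> G \<Longrightarrow> D G a"
| dmp: "D G (Imp a b) \<Longrightarrow> D G a \<Longrightarrow> D G b"

lemma imp_refl: "PP (Imp a a)"
proof -
  have 1: "PP (Imp (Imp a (Imp (Imp a a) a)) (Imp (Imp a (Imp a a)) (Imp a a)))" by (rule ax2)
  have 2: "PP (Imp (Imp a (Imp a a)) (Imp a a))" using mp[OF 1 ax1] .
  show ?thesis using mp[OF 2 ax1] .
qed

lemma deduction: "D (insert a G) b \<Longrightarrow> D G (Imp a b)"
proof (induction rule: D.induct)
  case (dthm b)
  show ?case by (rule D.dmp[OF D.dthm[OF ax1] D.dthm[OF dthm]])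
next
  case (dhyp b)
  show ?case
  proof (cases "b = a")
    case True then show ?thesis using D.dthm[OF imp_refl] by simp
  next
    case False then have "b \<in> G" using dhyp by simp
    then show ?thesis by (rule D.dmp[OF D.dthm[OF ax1] D.dhyp])
  qed
next
  case (dmp b c)
  show ?case by (rule D.dmp[OF D.dmp[OF D.dthm[OF ax2] dmp.IH(1)] dmp.IH(2)])
qed

lemma D_mono: "D G a \<Longrightarrow> G \<subseteq> H \<Longrightarrow> D H a"
  by (induction rule: D.induct) (auto intro: D.intros)

lemma D_compact: "D G a \<Longrightarrow> \<exists>F. finite F \<and> F \<subseteq> G \<and> D F a"
proof (induction rule: D.induct)
  case (dthm a)
  then show ?case using D.dthm by blast
next
  case (dhyp a)
  then show ?case by (intro exI[of _ "{a}"]) (auto intro: D.dhyp)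
next
  case (dmp a b)
  then obtain F1 F2 where "finite F1" "F1 \<subseteq> G" "D F1 (Imp a b)" "finite F2" "F2 \<subseteq> G" "D F2 a" by blast
  then show ?case
    by (intro exI[of _ "F1 \<union> F2"]) (auto intro: D.dmp D_mono)
qed

lemma D_empty: "D {} a \<Longrightarrow> PP a"
  by (induction rule: D.induct) (auto intro: ICK_plus.mp)

lemma D_cut: "D (insert a G) b \<Longrightarrow> D G a \<Longrightarrow> D G b"
  using deduction D.dmp by blast

definition thy :: "fm set \<Rightarrow> bool" where
  "thy G \<longleftrightarrow> (\<forall>a. D G a \<longrightarrow> a \<in> G)"

definition W :: "fm set set" where
  "W = {x. thy x \<and> (\<forall>a b. Or a b \<in> x \<longrightarrow> a \<in> x \<or> b \<in> x) \<and> Bot \<notin> x}"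

lemma lindenbaum:
  assumes "\<not> D G c"
  shows "\<exists>x\<in>W. G \<subseteq> x \<and> c \<notin> x"
proof -
  let ?A = "{H. G \<subseteq> H \<and> \<not> D H c}"
  have "\<exists>M\<in>?A. \<forall>X\<in>?A. M \<subseteq> X \<longrightarrow> X = M"
  proof (rule subset_Zorn_nonempty)
    show "?A \<noteq> {}" using assms by blast
  next
    fix C assume C: "C \<noteq> {}" "subset.chain ?A C"
    have "\<not> D (\<Union>C) c"
    proof
      assume "D (\<Union>C) c"
      then obtain F where F: "finite F" "F \<subseteq> \<Union>C" "D F c" using D_compact by blast
      obtain B where "B \<in> C" "F \<subseteq> B" using finite_subset_Union_chain[OF F(1,2) C(1,2)] by blast
      moreover have "B \<in> ?A" using \<open>B \<in> C\<close> C(2) unfolding subset.chain_def by blast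
      ultimately show False using F(3) D_mono by blast
    qed
    moreover have "G \<subseteq> \<Union>C"
    proof -
      obtain B where "B \<in> C" using C(1) by blast
      then have "B \<in> ?A" using C(2) unfolding subset.chain_def by blast
      then show ?thesis using \<open>B \<in> C\<close> by blast
    qed
    ultimately show "\<Union>C \<in> ?A" by blast
  qed
  then obtain M where M0: "M \<in> ?A" and max0: "\<forall>X\<in>?A. M \<subseteq> X \<longrightarrow> X = M"
    by blast
  have M: "G \<subseteq> M" "\<not> D M c" using M0 by auto
  have max: "\<And>X. G \<subseteq> X \<Longrightarrow> \<not> D X c \<Longrightarrow> M \<subseteq> X \<Longrightarrow> X = M" using max0 by blast
  have ins: "D (insert a M) c" if "a \<notin> M" for a
  proof (rule ccontr)
    assume "\<not> D (insert a M) c"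
    then have "insert a M = M" using max[of "insert a M"] M by blast
    then show False using that by blast
  qed
  have th: "thy M" unfolding thy_def
  proof (intro allI impI)
    fix a assume "D M a"
    show "a \<in> M"
    proof (rule ccontr)
      assume "a \<notin> M"
      then have "D M c" using D_cut[OF ins \<open>D M a\<close>] by blast
      then show False using M(2) by blast
    qed
  qed
  have pr: "a \<in> M \<or> b \<in> M" if "Or a b \<in> M" for a b
  proof (rule ccontr)
    assume "\<not> (a \<in> M \<or> b \<in> M)"
    then have "D M (Imp a c)" "D M (Imp b c)" using deduction[OF ins] by blast+
    moreover have "D M (Or a b)" using that by (rule D.dhyp)
    ultimately have "D M c" by (meson D.dmp[OF D.dmp[OF D.dmp[OF D.dthm[OF ax8]]]])
    then show False using M by blast
  qed
  have "Bot \<notin> M"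
  proof
    assume "Bot \<in> M" then have "D M c" by (rule D.dmp[OF D.dthm[OF ax9] D.dhyp])
    then show False using M by blast
  qed
  moreover have "c \<notin> M" using M(2) D.dhyp by blast
  ultimately show ?thesis using th pr M(1) unfolding W_def by blast
qed


lemma PP_D: "D {a} b \<Longrightarrow> PP (Imp a b)"
  using deduction D_empty by blast

lemma iff_intro: "PP (Imp a b) \<Longrightarrow> PP (Imp b a) \<Longrightarrow> PP (Iff a b)"
  unfolding Iff_def by (rule ICK_plus.mp[OF ICK_plus.mp[OF ax5]])

lemma iff_elim1: "PP (Iff a b) \<Longrightarrow> PP (Imp a b)"
  unfolding Iff_def by (rule ICK_plus.mp[OF ax3])

lemma iff_elim2: "PP (Iff a b) \<Longrightarrow> PP (Imp b a)"
  unfolding Iff_def by (rule ICK_plus.mp[OF ax4])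

lemma PP_Top: "PP Top"
  unfolding Top_def by (rule imp_refl)

lemma inst_cond_and: "PP (Iff (Cond p (And q r)) (And (Cond p q) (Cond p r)))"
  using usubst[OF cond_and, where s="\<lambda>n. if n = 0 then p else if n = 1 then q else r"]
  by (simp add: Iff_def)

lemma inst_cond_top: "PP (Iff (Cond p Top) Top)"
  using usubst[OF cond_top, where s="\<lambda>n. p"]
  by (simp add: Iff_def Top_def)

lemma inst_CMP: "PP (Imp (And p (Cond p q)) q)"
  using usubst[OF extra[of CMP], where s="\<lambda>n. if n = 0 then p else q"]
  by (simp add: CMP_def)

lemma cond_thm: "PP c \<Longrightarrow> PP (Cond p c)"
proof -
  assume c: "PP c"
  have 1: "PP (Imp c Top)" by (rule ICK_plus.mp[OF ax1 PP_Top])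
  have 2: "PP (Imp Top c)" by (rule ICK_plus.mp[OF ax1 c])
  have 3: "PP (Iff (Cond p c) (Cond p Top))" by (rule cong_r[OF iff_intro[OF 1 2]])
  have 4: "PP (Cond p Top)" by (rule ICK_plus.mp[OF iff_elim2[OF inst_cond_top] PP_Top])
  show ?thesis by (rule ICK_plus.mp[OF iff_elim2[OF 3] 4])
qed

lemma and_imp: "PP (Imp a b) \<Longrightarrow> PP (Iff a (And a b))"
proof -
  assume ab: "PP (Imp a b)"
  have "D {a} (And a b)"
    by (rule D.dmp[OF D.dmp[OF D.dthm[OF ax5] D.dhyp] D.dmp[OF D.dthm[OF ab] D.dhyp]]) auto
  then show ?thesis using iff_intro PP_D ax3 by blast
qed

lemma mp_and: "PP (Imp (And (Imp a b) a) b)"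
proof -
  have "D {And (Imp a b) a} b"
    by (rule D.dmp[OF D.dmp[OF D.dthm[OF ax3] D.dhyp] D.dmp[OF D.dthm[OF ax4] D.dhyp]]) auto
  then show ?thesis by (rule PP_D)
qed

subsection \<open>Prime theories\<close>

lemma W_D: "x \<in> W \<Longrightarrow> D x a \<Longrightarrow> a \<in> x"
  unfolding W_def thy_def by blast

lemma W_thm: "x \<in> W \<Longrightarrow> PP a \<Longrightarrow> a \<in> x"
  using W_D D.dthm by blast

lemma W_mp: "x \<in> W \<Longrightarrow> Imp a b \<in> x \<Longrightarrow> a \<in> x \<Longrightarrow> b \<in> x"
  using W_D D.dmp D.dhyp by meson

lemma W_and: "x \<in> W \<Longrightarrow> And a b \<in> x \<longleftrightarrow> a \<in> x \<and> b \<in> x"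
proof -
  assume x: "x \<in> W"
  show ?thesis
  proof
    assume "And a b \<in> x" then show "a \<in> x \<and> b \<in> x"
      using W_mp[OF x W_thm[OF x ax3]] W_mp[OF x W_thm[OF x ax4]] by blast
  next
    assume "a \<in> x \<and> b \<in> x" then show "And a b \<in> x"
      using W_mp[OF x W_mp[OF x W_thm[OF x ax5]]] by blast
  qed
qed

lemma W_or: "x \<in> W \<Longrightarrow> Or a b \<in> x \<longleftrightarrow> a \<in> x \<or> b \<in> x"
proof -
  assume x: "x \<in> W"
  show ?thesis
  proof
    assume "Or a b \<in> x" then show "a \<in> x \<or> b \<in> x" using x unfolding W_def by blast
  next
    assume "a \<in> x \<or> b \<in> x" then show "Or a b \<in> x"
      using W_mp[OF x W_thm[OF x ax6]] W_mp[OF x W_thm[OF x ax7]] by blast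
  qed
qed

lemma W_imp_thm: "x \<in> W \<Longrightarrow> PP (Imp a b) \<Longrightarrow> a \<in> x \<Longrightarrow> b \<in> x"
  using W_mp W_thm by blast

lemma cond_imp: "x \<in> W \<Longrightarrow> PP (Imp a b) \<Longrightarrow> Cond p a \<in> x \<Longrightarrow> Cond p b \<in> x"
proof -
  assume x: "x \<in> W" and ab: "PP (Imp a b)" and pa: "Cond p a \<in> x"
  have "PP (Iff (Cond p a) (Cond p (And a b)))" by (rule cong_r[OF and_imp[OF ab]])
  then have "Cond p (And a b) \<in> x" using W_imp_thm[OF x iff_elim1 pa] by blast
  then have "And (Cond p a) (Cond p b) \<in> x" using W_imp_thm[OF x iff_elim1[OF inst_cond_and]] by blast
  then show ?thesis using W_and[OF x] by blast
qed

lemma cond_filter: "x \<in> W \<Longrightarrow> D {c. Cond p c \<in> x} a \<Longrightarrow> Cond p a \<in> x"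
proof -
  assume x: "x \<in> W"
  show "D {c. Cond p c \<in> x} a \<Longrightarrow> Cond p a \<in> x"
  proof (induction rule: D.induct)
    case (dthm a)
    then show ?case using W_thm[OF x cond_thm] by blast
  next
    case (dhyp a)
    then show ?case by simp
  next
    case (dmp a b)
    have "And (Cond p (Imp a b)) (Cond p a) \<in> x" using W_and[OF x] dmp.IH by blast
    then have "Cond p (And (Imp a b) a) \<in> x" using W_imp_thm[OF x iff_elim2[OF inst_cond_and]] by blast
    then show ?case using cond_imp[OF x mp_and] by blast
  qed
qed

lemma ext_imp: "{z\<in>W. a \<in> z} \<subseteq> {z\<in>W. b \<in> z} \<Longrightarrow> PP (Imp a b)"
proof (rule ccontr)
  assume sub: "{z\<in>W. a \<in> z} \<subseteq> {z\<in>W. b \<in> z}" and n: "\<not> PP (Imp a b)"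
  have "\<not> D {a} b" using PP_D n by blast
  then obtain x where "x \<in> W" "{a} \<subseteq> x" "b \<notin> x" using lindenbaum by blast
  then show False using sub by blast
qed

subsection \<open>Canonical model\<close>

definition RC :: "fm set set \<Rightarrow> fm set \<Rightarrow> fm set \<Rightarrow> bool" where
  "RC A x y \<longleftrightarrow> x \<in> W \<and> y \<in> W \<and> (\<forall>p c. {z\<in>W. p \<in> z} = A \<and> Cond p c \<in> x \<longrightarrow> c \<in> y)"

definition VC :: "nat \<Rightarrow> fm set set" where
  "VC n = {z\<in>W. Var n \<in> z}"

lemma truth: "x \<in> W \<Longrightarrow> sat W (\<subseteq>) RC VC x a \<longleftrightarrow> a \<in> x"
proof (induction a arbitrary: x)
  case (Var n)
  then show ?case by (simp add: VC_def)
next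
  case Bot
  then show ?case by (simp add: W_def)
next
  case (And a b)
  then show ?case using W_and by simp
next
  case (Or a b)
  then show ?case using W_or by simp
next
  case (Imp a b)
  have "(\<forall>y\<in>W. x \<subseteq> y \<longrightarrow> a \<in> y \<longrightarrow> b \<in> y) \<longleftrightarrow> Imp a b \<in> x"
  proof
    assume h: "\<forall>y\<in>W. x \<subseteq> y \<longrightarrow> a \<in> y \<longrightarrow> b \<in> y"
    show "Imp a b \<in> x"
    proof (rule ccontr)
      assume n: "Imp a b \<notin> x"
      have "\<not> D (insert a x) b"
      proof
        assume "D (insert a x) b"
        then have "D x (Imp a b)" by (rule deduction)
        then show False using n W_D[OF Imp.prems] by blast
      qed
      then obtain y where "y \<in> W" "insert a x \<subseteq> y" "b \<notin> y" using lindenbaum by blast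
      then show False using h by blast
    qed
  next
    assume "Imp a b \<in> x"
    then show "\<forall>y\<in>W. x \<subseteq> y \<longrightarrow> a \<in> y \<longrightarrow> b \<in> y" using W_mp by blast
  qed
  then show ?case using Imp.IH by simp
next
  case (Cond a b)
  have x: "x \<in> W" by fact
  have eqA: "{z\<in>W. sat W (\<subseteq>) RC VC z a} = {z\<in>W. a \<in> z}" using Cond.IH(1) by blast
  have "(\<forall>y. RC {z\<in>W. a \<in> z} x y \<longrightarrow> b \<in> y) \<longleftrightarrow> Cond a b \<in> x"
  proof
    assume h: "\<forall>y. RC {z\<in>W. a \<in> z} x y \<longrightarrow> b \<in> y"
    show "Cond a b \<in> x"
    proof (rule ccontr)
      assume n: "Cond a b \<notin> x"
      have "\<not> D {c. Cond a c \<in> x} b" using cond_filter[OF x] n by blast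
      then obtain y where y: "y \<in> W" "{c. Cond a c \<in> x} \<subseteq> y" "b \<notin> y" using lindenbaum by blast
      have "RC {z\<in>W. a \<in> z} x y" unfolding RC_def
      proof (intro conjI allI impI)
        fix p c assume pc: "{z\<in>W. p \<in> z} = {z\<in>W. a \<in> z} \<and> Cond p c \<in> x"
        have eq: "{z\<in>W. p \<in> z} = {z\<in>W. a \<in> z}" using pc by blast
        have "PP (Iff p a)" by (rule iff_intro[OF ext_imp[OF equalityD1[OF eq]] ext_imp[OF equalityD2[OF eq]]])
        then have "PP (Iff (Cond p c) (Cond a c))" by (rule cong_l)
        then have "Cond a c \<in> x" using W_imp_thm[OF x iff_elim1] pc by blast
        then show "c \<in> y" using y by blast
      qed (use x y in auto)
      then show False using h y by blast
    qed
  next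
    assume "Cond a b \<in> x"
    then show "\<forall>y. RC {z\<in>W. a \<in> z} x y \<longrightarrow> b \<in> y" unfolding RC_def by blast
  qed
  moreover have "(\<forall>y. RC {z\<in>W. a \<in> z} x y \<longrightarrow> sat W (\<subseteq>) RC VC y b) \<longleftrightarrow>
                 (\<forall>y. RC {z\<in>W. a \<in> z} x y \<longrightarrow> b \<in> y)"
  proof -
    have "\<And>y. RC {z\<in>W. a \<in> z} x y \<Longrightarrow> sat W (\<subseteq>) RC VC y b \<longleftrightarrow> b \<in> y"
      using Cond.IH(2) unfolding RC_def by blast
    then show ?thesis by blast
  qed
  ultimately show ?case by (simp only: sat.simps eqA)
qed

lemma canon_frame: "W \<noteq> {} \<Longrightarrow> cond_frame W (\<subseteq>) RC"
  unfolding cond_frame_def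
proof (intro conjI ballI allI impI)
  fix A x y z assume "x \<in> W" "y \<in> W" "z \<in> W" "x \<subseteq> y" "RC A y z"
  then show "\<exists>w\<in>W. RC A x w \<and> w \<subseteq> z"
    by (intro bexI[of _ z]) (auto simp: RC_def)
qed (auto simp: RC_def)

lemma canon_mp: "mp_condition W (\<subseteq>) RC"
  unfolding mp_condition_def up_def
proof (intro ballI allI impI)
  fix x A assume x: "x \<in> W" and A: "upset W (\<subseteq>) A" "x \<in> A"
  have "RC A x x" unfolding RC_def
  proof (intro conjI allI impI)
    fix p c assume pc: "{z\<in>W. p \<in> z} = A \<and> Cond p c \<in> x"
    then have "p \<in> x" using A x by blast
    then have "And p (Cond p c) \<in> x" using pc W_and[OF x] by blast
    then show "c \<in> x" using W_imp_thm[OF x inst_CMP] by blast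
  qed (use x in auto)
  then show "x \<in> {z \<in> W. \<exists>y\<in>{y. RC A x y}. y \<subseteq> z}" using x by blast
qed

lemma canon_val: "valuation W (\<subseteq>) VC"
  unfolding valuation_def upset_def VC_def by blast

lemma completeness: "valid_class TYPE(fm set) a \<Longrightarrow> PP a"
proof (rule ccontr)
  assume v: "valid_class TYPE(fm set) a" and n: "\<not> PP a"
  have "\<not> D {} a" using D_empty n by blast
  then obtain x where x: "x \<in> W" "a \<notin> x" using lindenbaum by blast
  have "cond_frame W (\<subseteq>) RC" using canon_frame x by blast
  then have "valid_frame W (\<subseteq>) RC a"
    using v[unfolded valid_class_def, rule_format, of W "(\<subseteq>)" RC] canon_mp by blast
  then have "sat W (\<subseteq>) RC VC x a"
    using canon_val x unfolding valid_frame_def by blast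
  then show False using truth[OF x(1)] x(2) by blast
qed

theorem proposition5p8:
  fixes a :: fm
  shows "(ICK_plus {CMP} a \<longrightarrow> valid_class TYPE('w) a)
       \<and> (valid_class TYPE(fm set) a \<longrightarrow> ICK_plus {CMP} a)"
  using sound_class completeness by blast

end
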